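(* Fix cylindric partitions $\alpha$ and $\beta$ on $\mathcal{C}_{k,n}$. There exists a bijection \[ \operatorname{CRSK}:\ \bigsqcup_{\substack{\mu\in\operatorname{Cylpar};\\ \mu\subseteq\alpha;\ \mu\subseteq\beta}} \operatorname{SSCT}(\alpha/\mu)\times\operatorname{SSCT}(\beta/\mu)\ \longrightarrow\ \bigsqcup_{\substack{\lambda\in\operatorname{Cylpar};\\ \alpha\subseteq\lambda;\ \beta\subseteq\lambda}} \operatorname{SSCT}(\lambda/\beta)\times\operatorname{SSCT}(\lambda/\alpha) \] such that for every $\mu\in\operatorname{Cylpar}$ with $\mu\subseteq\alpha$, $\mu\subseteq\beta$, every $T\in\operatorname{SSCT}(\alpha/\mu)$ and every $U\in\operatorname{SSCT}(\beta/\mu)$, if $\operatorname{CRSK}(((T,U),\mu))=((P,Q),\lambda)$ then $\operatorname{wt}(T)=\operatorname{wt}(P)$ and $\operatorname{wt}(U)=\operatorname{wt}(Q)$.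
   Context: Fix integers $n>k\ge 1$. A cylindric partition is a weakly decreasing sequence $(\lambda_m)_{m\in\mathbb Z}$ of integers with $\lambda_m=\lambda_{m+k}+n-k$ for all $m$; $\operatorname{Cylpar}$ is the set of cylindric partitions. A point $(x,y)\in\mathbb Z^2$ lies in plane row $x$ and plane column $y$, and lies in $\lambda$ if $y\le\lambda_x$. A box is an equivalence class of points modulo translation by integer multiples of $(-k,n-k)$ (so boxes are elements of the cylinder $\mathcal C_{k,n}=\mathbb Z^2/(-k,n-k)\mathbb Z$); $\pi$ is the projection from points to boxes, and a box lies in $\lambda$ iff its representatives do. We write $\mu\subseteq\lambda$ if $\mu_m\le\lambda_m$ for all $m$; then the boxes of $\lambda/\mu$ are the (finitely many) boxes lying in $\lambda$ but not in $\mu$. Fix a totally ordered alphabet $A$. A semistandard cylindric tableau of shape $\lambda/\mu$ ($\mu\subseteq\lambda$) is a map $R$ from the boxes of $\lambda/\mu$ to $A$ such that $R(\pi(x,y_1))\le R(\pi(x,y_2))$ whenever the points $(x,y_1),(x,y_2)$ lie in $\lambda$ but not in $\mu$ and $y_1<y_2$, and $R(\pi(x_1,y))<R(\pi(x_2,y))$ whenever $(x_1,y),(x_2,y)$ lie in $\lambda$ but not in $\mu$ and $x_1<x_2$; the pair $(\lambda,\mu)$ is part of the data of the tableau. $\operatorname{SSCT}(\lambda/\mu)$ denotes the set of such tableaux. The weight $\operatorname{wt}(R):A\to\mathbb N$ sends $a$ to the number of boxes whose entry is $a$. The disjoint union $\bigsqcup_{s\in S}T_s$ is the set of pairs $(t,s)$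 with $s\in S$, $t\in T_s$. *)

theory Defs
  imports Main
begin

definition is_cylpar :: "nat \<Rightarrow> nat \<Rightarrow> (int \<Rightarrow> int) \<Rightarrow> bool" where
  "is_cylpar k n lam \<longleftrightarrow>
     (\<forall>m. lam (m + 1) \<le> lam m) \<and> (\<forall>m. lam m = lam (m + int k) + int n - int k)"

definition cyl_subseteq :: "(int \<Rightarrow> int) \<Rightarrow> (int \<Rightarrow> int) \<Rightarrow> bool" where
  "cyl_subseteq mu lam \<longleftrightarrow> (\<forall>m. mu m \<le> lam m)"

definition in_shape :: "(int \<Rightarrow> int) \<Rightarrow> int \<times> int \<Rightarrow> bool" where
  "in_shape lam p \<longleftrightarrow> snd p \<le> lam (fst p)"

text \<open>Boxes: equivalence classes of points modulo integer multiples of (-k, n-k).\<close>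
type_synonym box = "(int \<times> int) set"

definition box_proj :: "nat \<Rightarrow> nat \<Rightarrow> int \<times> int \<Rightarrow> box" where
  "box_proj k n p = {(fst p - int k * t, snd p + (int n - int k) * t) | t. True}"

definition skew_points :: "(int \<Rightarrow> int) \<Rightarrow> (int \<Rightarrow> int) \<Rightarrow> (int \<times> int) set" where
  "skew_points lam mu = {p. in_shape lam p \<and> \<not> in_shape mu p}"

definition skew_boxes :: "nat \<Rightarrow> nat \<Rightarrow> (int \<Rightarrow> int) \<Rightarrow> (int \<Rightarrow> int) \<Rightarrow> box set" where
  "skew_boxes k n lam mu = box_proj k n ` skew_points lam mu"

type_synonym 'a cyltab = "(int \<Rightarrow> int) \<times> (int \<Rightarrow> int) \<times> (box \<Rightarrow> 'a option)"

definition SSCT :: "nat \<Rightarrow> nat \<Rightarrow> (int \<Rightarrow> int) \<Rightarrow> (int \<Rightarrow> int) \<Rightarrow> ('a::linorder) cyltab set" where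
  "SSCT k n lam mu = {(lam, mu, R) | R.
      dom R = skew_boxes k n lam mu \<and>
      (\<forall>x y1 y2. (x, y1) \<in> skew_points lam mu \<longrightarrow> (x, y2) \<in> skew_points lam mu \<longrightarrow> y1 < y2 \<longrightarrow>
          the (R (box_proj k n (x, y1))) \<le> the (R (box_proj k n (x, y2)))) \<and>
      (\<forall>x1 x2 y. (x1, y) \<in> skew_points lam mu \<longrightarrow> (x2, y) \<in> skew_points lam mu \<longrightarrow> x1 < x2 \<longrightarrow>
          the (R (box_proj k n (x1, y))) < the (R (box_proj k n (x2, y)))) }"

definition wt :: "('a::linorder) cyltab \<Rightarrow> 'a \<Rightarrow> nat" where
  "wt T a = card {b. snd (snd T) b = Some a}"

definition CRSK_domain :: "nat \<Rightarrow> nat \<Rightarrow> (int \<Rightarrow> int) \<Rightarrow> (int \<Rightarrow> int)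
    \<Rightarrow> ((('a::linorder) cyltab \<times> 'a cyltab) \<times> (int \<Rightarrow> int)) set" where
  "CRSK_domain k n \<alpha> \<beta> = {((T, U), mu) | T U mu.
      is_cylpar k n mu \<and> cyl_subseteq mu \<alpha> \<and> cyl_subseteq mu \<beta> \<and>
      T \<in> SSCT k n \<alpha> mu \<and> U \<in> SSCT k n \<beta> mu}"

definition CRSK_codomain :: "nat \<Rightarrow> nat \<Rightarrow> (int \<Rightarrow> int) \<Rightarrow> (int \<Rightarrow> int)
    \<Rightarrow> ((('a::linorder) cyltab \<times> 'a cyltab) \<times> (int \<Rightarrow> int)) set" where
  "CRSK_codomain k n \<alpha> \<beta> = {((P, Q), lam) | P Q lam.
      is_cylpar k n lam \<and> cyl_subseteq \<alpha> lam \<and> cyl_subseteq \<beta> lam \<and>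
      P \<in> SSCT k n lam \<beta> \<and> Q \<in> SSCT k n lam \<alpha>}"

end

theory Submission
  imports Defs "HOL-Library.Equipollence"
begin

locale cyl = fixes k n :: nat assumes k1: "1 \<le> k" and kn: "k < n"
begin

abbreviation "cp \<equiv> is_cylpar k n"
abbreviation "NN \<equiv> int n - int k"

lemma NN_pos: "NN > 0" using kn by simp

lemma cyl_period: assumes "cp l" shows "l (m + int k) = l m - NN"
proof -
  have "l m = l (m + int k) + int n - int k" using assms unfolding is_cylpar_def by blast
  then show ?thesis by simp
qed

lemma cyl_shift: assumes "cp l" shows "l (m + int k * t) = l m - NN * t"
proof (induction t rule: int_induct[where k=0])
  case base then show ?case by simp
next
  case (step1 i)
  have "l (m + int k * (i+1)) = l ((m + int k * i) + int k)" by (simp add: algebra_simps)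
  also have "\<dots> = l (m + int k * i) - NN" using cyl_period[OF assms] by blast
  finally show ?case using step1 by (simp add: algebra_simps)
next
  case (step2 i)
  have "l (m + int k * i) = l ((m + int k * (i - 1)) + int k)" by (simp add: algebra_simps)
  also have "\<dots> = l (m + int k * (i-1)) - NN" using cyl_period[OF assms] by blast
  finally show ?case using step2 by (simp add: algebra_simps)
qed

lemma cyl_anti: assumes "cp l" "m \<le> m'" shows "l m' \<le> l m"
  using assms(2)
proof (induction m' rule: int_ge_induct)
  case base then show ?case by simp
next
  case (step i) then show ?case using assms(1) unfolding is_cylpar_def by (meson order_trans)
qed

lemma box_proj_eq: "box_proj k n p = box_proj k n q \<longleftrightarrow> (\<exists>t. q = (fst p - int k * t, snd p + NN * t))"
proof
  assume "box_proj k n p = box_proj k n q"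
  moreover have "q \<in> box_proj k n q" unfolding box_proj_def by (cases q) (auto intro: exI[of _ 0])
  ultimately show "\<exists>t. q = (fst p - int k * t, snd p + NN * t)" unfolding box_proj_def by auto
next
  assume "\<exists>t. q = (fst p - int k * t, snd p + NN * t)"
  then obtain t where q: "q = (fst p - int k * t, snd p + NN * t)" by blast
  show "box_proj k n p = box_proj k n q"
  proof
    show "box_proj k n p \<subseteq> box_proj k n q"
    proof
      fix z assume "z \<in> box_proj k n p"
      then obtain s where z: "z = (fst p - int k * s, snd p + NN * s)" unfolding box_proj_def by auto
      show "z \<in> box_proj k n q" unfolding box_proj_def using z q
        by (auto intro!: exI[of _ "s - t"] simp: algebra_simps)
    qed
    show "box_proj k n q \<subseteq> box_proj k n p"
    proof
      fix z assume "z \<in> box_proj k n q"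
      then obtain s where z: "z = (fst q - int k * s, snd q + NN * s)" unfolding box_proj_def by auto
      show "z \<in> box_proj k n p" unfolding box_proj_def using z q
        by (auto intro!: exI[of _ "s + t"] simp: algebra_simps)
    qed
  qed
qed

lemma in_shape_shift: assumes "cp l"
  shows "in_shape l (x - int k * t, y + NN * t) \<longleftrightarrow> in_shape l (x, y)"
proof -
  have "l (x - int k * t) = l x + NN * t" using cyl_shift[OF assms, of x "-t"] by simp
  then show ?thesis unfolding in_shape_def by auto
qed

lemma skew_points_shift: assumes "cp l" "cp m"
  shows "(x - int k * t, y + NN * t) \<in> skew_points l m \<longleftrightarrow> (x, y) \<in> skew_points l m"
  unfolding skew_points_def using in_shape_shift[OF assms(1)] in_shape_shift[OF assms(2)] by simp

lemma skew_boxes_mem: assumes "cp l" "cp m"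
  shows "box_proj k n p \<in> skew_boxes k n l m \<longleftrightarrow> p \<in> skew_points l m"
proof
  assume "box_proj k n p \<in> skew_boxes k n l m"
  then obtain q where q: "q \<in> skew_points l m" "box_proj k n q = box_proj k n p"
    unfolding skew_boxes_def by auto
  then obtain t where "p = (fst q - int k * t, snd q + NN * t)" using box_proj_eq by blast
  then show "p \<in> skew_points l m" using skew_points_shift[OF assms, of "fst q" t "snd q"] q(1) by simp
qed (auto simp: skew_boxes_def)

definition RP :: "(int \<Rightarrow> int) \<Rightarrow> (int \<Rightarrow> int) \<Rightarrow> (int \<times> int) set" where
  "RP l m = (SIGMA x:{0..<int k}. {m x<..l x})"

lemma rep_point: "box_proj k n (x, y) = box_proj k n (x mod int k, y + NN * (x div int k))"
  unfolding box_proj_eq by (auto intro!: exI[of _ "x div int k"] simp: algebra_simps minus_mod_eq_mult_div[symmetric])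

lemma skew_boxes_RP: assumes "cp l" "cp m"
  shows "skew_boxes k n l m = box_proj k n ` RP l m"
proof
  show "skew_boxes k n l m \<subseteq> box_proj k n ` RP l m"
  proof
    fix b assume "b \<in> skew_boxes k n l m"
    then obtain x y where xy: "(x,y) \<in> skew_points l m" "b = box_proj k n (x,y)"
      unfolding skew_boxes_def by auto
    let ?p = "(x mod int k, y + NN * (x div int k))"
    have b: "b = box_proj k n ?p" using xy(2) rep_point by simp
    have "?p \<in> skew_points l m" using skew_boxes_mem[OF assms, of ?p] xy b
      skew_boxes_mem[OF assms, of "(x,y)"] by simp
    moreover have "0 \<le> x mod int k" "x mod int k < int k" using k1 by auto
    ultimately have "?p \<in> RP l m" unfolding RP_def skew_points_def in_shape_def by auto
    then show "b \<in> box_proj k n ` RP l m" using b by blast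
  qed
  show "box_proj k n ` RP l m \<subseteq> skew_boxes k n l m"
    unfolding RP_def skew_boxes_def skew_points_def in_shape_def by auto
qed

lemma inj_RP: "inj_on (box_proj k n) (RP l m)"
proof (rule inj_onI)
  fix p q assume p: "p \<in> RP l m" and q: "q \<in> RP l m" and e: "box_proj k n p = box_proj k n q"
  then obtain t where t: "q = (fst p - int k * t, snd p + NN * t)" using box_proj_eq by blast
  have "0 \<le> fst p" "fst p < int k" "0 \<le> fst q" "fst q < int k" using p q unfolding RP_def by auto
  have ft: "fst q = fst p - int k * t" using t by simp
  have "t = 0"
  proof (rule ccontr)
    assume "t \<noteq> 0"
    then consider "t \<ge> 1" | "t \<le> -1" by linarith
    then show False
    proof cases
      case 1 then have "int k * t \<ge> int k" using k1 by (simp add: mult_le_cancel_left1)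
      then show False using ft \<open>fst p < int k\<close> \<open>0 \<le> fst q\<close> by linarith
    next
      case 2 then have "int k * t \<le> - int k" using k1
        by (metis mult.right_neutral mult_left_mono mult_minus_right of_nat_0_le_iff)
      then show False using ft \<open>0 \<le> fst p\<close> \<open>fst q < int k\<close> by linarith
    qed
  qed
  then show "p = q" using t by simp
qed

lemma finite_RP: "finite (RP l m)" unfolding RP_def by auto

lemma finite_skew_boxes: "cp l \<Longrightarrow> cp m \<Longrightarrow> finite (skew_boxes k n l m)"
  using skew_boxes_RP finite_RP by simp

definition ssize :: "(int \<Rightarrow> int) \<Rightarrow> (int \<Rightarrow> int) \<Rightarrow> int" where
  "ssize l m = (\<Sum>x\<in>{0..<int k}. l x - m x)"

lemma card_skew_boxes: assumes "cp l" "cp m" "\<forall>x. m x \<le> l x"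
  shows "int (card (skew_boxes k n l m)) = ssize l m"
proof -
  have "card (skew_boxes k n l m) = card (RP l m)" unfolding skew_boxes_RP[OF assms(1,2)]
    by (rule card_image[OF inj_RP])
  also have "\<dots> = (\<Sum>x\<in>{0..<int k}. card {m x<..l x})" unfolding RP_def
    by (rule card_SigmaI) auto
  also have "\<dots> = (\<Sum>x\<in>{0..<int k}. nat (l x - m x))" by simp
  finally have "int (card (skew_boxes k n l m)) = (\<Sum>x\<in>{0..<int k}. int (nat (l x - m x)))" by simp
  then show ?thesis unfolding ssize_def using assms(3) by simp
qed

end


context cyl begin

lemma sum_shift_m1: assumes "\<And>x. g (x + int k) = g x"
  shows "(\<Sum>x\<in>{0..<int k}. g (x - 1)) = (\<Sum>x\<in>{0..<int k}. (g x :: int))"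
proof -
  have "(\<Sum>x\<in>{0..<int k}. g (x - 1)) = (\<Sum>y\<in>(\<lambda>x. x - 1) ` {0..<int k}. g y)"
    by (rule sum.reindex_cong[symmetric]) (auto simp: inj_on_def)
  also have "(\<lambda>x. x - 1) ` {0..<int k} = insert (-1) {0..<int k - 1}"
  proof -
    have "(\<lambda>x. x - 1) ` {0..<int k} = {-1..<int k - 1}"
    proof (rule set_eqI, rule iffI)
      fix x assume "x \<in> {-1..<int k - 1}" then show "x \<in> (\<lambda>x. x - 1) ` {0..<int k}"
        by (auto intro!: image_eqI[of _ _ "x+1"])
    qed auto
    also have "\<dots> = insert (-1) {0..<int k - 1}" using k1 by auto
    finally show ?thesis .
  qed
  also have "(\<Sum>y\<in>insert (-1) {0..<int k - 1}. g y) = g (-1) + (\<Sum>y\<in>{0..<int k - 1}. g y)"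
    by (rule sum.insert) auto
  also have "g (-1) = g (int k - 1)" using assms[of "-1"] by simp
  also have "g (int k - 1) + (\<Sum>y\<in>{0..<int k - 1}. g y) = (\<Sum>y\<in>insert (int k - 1) {0..<int k - 1}. g y)"
    by (rule sum.insert[symmetric]) auto
  also have "insert (int k - 1) {0..<int k - 1} = {0..<int k}" using k1 by auto
  finally show ?thesis .
qed

lemma sum_shift_p1: assumes "\<And>x. g (x + int k) = g x"
  shows "(\<Sum>x\<in>{0..<int k}. g (x + 1)) = (\<Sum>x\<in>{0..<int k}. (g x :: int))"
proof -
  have h: "(\<lambda>y. g (y + 1)) (x + int k) = (\<lambda>y. g (y + 1)) x" for x
    using assms[of "x+1"] by (simp add: algebra_simps)
  have "(\<Sum>x\<in>{0..<int k}. (\<lambda>y. g (y + 1)) (x - 1)) = (\<Sum>x\<in>{0..<int k}. (\<lambda>y. g (y + 1)) x)"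
    by (rule sum_shift_m1) (rule h)
  then show ?thesis by simp
qed

definition interl :: "(int \<Rightarrow> int) \<Rightarrow> (int \<Rightarrow> int) \<Rightarrow> bool" where
  "interl v r \<longleftrightarrow> (\<forall>m. v m \<le> r m \<and> r (m + 1) \<le> v m)"

definition strip :: "nat \<Rightarrow> (int \<Rightarrow> int) \<Rightarrow> (int \<Rightarrow> int) \<Rightarrow> bool" where
  "strip p v r \<longleftrightarrow> cp v \<and> cp r \<and> interl v r \<and> card (skew_boxes k n r v) = p"

lemma strip_iff: "strip p v r \<longleftrightarrow> cp v \<and> cp r \<and> interl v r \<and> int p = ssize r v"
  unfolding strip_def using card_skew_boxes[of r v] unfolding interl_def by auto

definition Lset where "Lset a b p q = {u. strip p u a \<and> strip q u b}"
definition Rset where "Rset a b p q = {l. strip p b l \<and> strip q a l}"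

definition Fm :: "(int \<Rightarrow> int) \<Rightarrow> (int \<Rightarrow> int) \<Rightarrow> (int \<Rightarrow> int) \<Rightarrow> (int \<Rightarrow> int)" where
  "Fm a b u = (\<lambda>m. max (a m) (b m) + min (a (m - 1)) (b (m - 1)) - u (m - 1))"
definition Gm :: "(int \<Rightarrow> int) \<Rightarrow> (int \<Rightarrow> int) \<Rightarrow> (int \<Rightarrow> int) \<Rightarrow> (int \<Rightarrow> int)" where
  "Gm a b l = (\<lambda>m. min (a m) (b m) + max (a (m + 1)) (b (m + 1)) - l (m + 1))"

lemma cp_mono: "cp l \<Longrightarrow> l (m + 1) \<le> l m" unfolding is_cylpar_def by blast

lemma cp_intro: assumes "\<And>m. l (m + 1) \<le> l m" "\<And>m. l (m + int k) = l m - NN" shows "cp l"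
  unfolding is_cylpar_def using assms by (metis add.commute add_diff_cancel_left diff_add_cancel diff_diff_eq2)

lemma F_in: assumes "u \<in> Lset a b p q" shows "Fm a b u \<in> Rset a b p q"
proof -
  have s: "strip p u a" "strip q u b" using assms unfolding Lset_def by auto
  have ca: "cp a" and cb: "cp b" and cu: "cp u" using s unfolding strip_def by auto
  have ia: "\<And>m. u m \<le> a m" "\<And>m. a (m+1) \<le> u m" and ib: "\<And>m. u m \<le> b m" "\<And>m. b (m+1) \<le> u m"
    using s unfolding strip_def interl_def by auto
  define l where "l = Fm a b u"
  have ge: "max (a m) (b m) \<le> l m" for m
    using ia(1)[of "m-1"] ib(1)[of "m-1"] unfolding l_def Fm_def by auto
  have le: "l (m + 1) \<le> min (a m) (b m)" for m
    using ia(2)[of m] ib(2)[of m] unfolding l_def Fm_def by auto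
  have per: "l (m + int k) = l m - NN" for m
  proof -
    have e: "m + int k - 1 = (m - 1) + int k" by simp
    show ?thesis unfolding l_def Fm_def e cyl_period[OF ca] cyl_period[OF cb] cyl_period[OF cu]
      by (simp add: max_def min_def)
  qed
  have cl: "cp l"
  proof (rule cp_intro)
    fix m show "l (m + 1) \<le> l m" using ge[of m] le[of m] by auto
    show "l (m + int k) = l m - NN" by (rule per)
  qed
  have il: "interl a l" "interl b l" unfolding interl_def using ge le by (meson max.bounded_iff min.bounded_iff)+
  have sa: "int p = ssize a u" "int q = ssize b u" using s unfolding strip_iff by auto
  have "ssize l b = (\<Sum>x\<in>{0..<int k}. (max (a x) (b x) - b x) + (\<lambda>y. min (a y) (b y) - u y) (x - 1))"
    unfolding ssize_def l_def Fm_def by (simp add: algebra_simps)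
  also have "\<dots> = (\<Sum>x\<in>{0..<int k}. max (a x) (b x) - b x) + (\<Sum>x\<in>{0..<int k}. (\<lambda>y. min (a y) (b y) - u y) (x - 1))"
    by (rule sum.distrib)
  also have "(\<Sum>x\<in>{0..<int k}. (\<lambda>y. min (a y) (b y) - u y) (x - 1)) = (\<Sum>x\<in>{0..<int k}. min (a x) (b x) - u x)"
    by (rule sum_shift_m1) (simp add: cyl_period[OF ca] cyl_period[OF cb] cyl_period[OF cu] min_def)
  also have "(\<Sum>x\<in>{0..<int k}. max (a x) (b x) - b x) + (\<Sum>x\<in>{0..<int k}. min (a x) (b x) - u x)
      = (\<Sum>x\<in>{0..<int k}. a x - u x)"
    by (subst sum.distrib[symmetric]) (rule sum.cong, auto simp: max_def min_def)
  finally have s1: "ssize l b = ssize a u" unfolding ssize_def .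
  have "ssize l a = (\<Sum>x\<in>{0..<int k}. (max (a x) (b x) - a x) + (\<lambda>y. min (a y) (b y) - u y) (x - 1))"
    unfolding ssize_def l_def Fm_def by (simp add: algebra_simps)
  also have "\<dots> = (\<Sum>x\<in>{0..<int k}. max (a x) (b x) - a x) + (\<Sum>x\<in>{0..<int k}. (\<lambda>y. min (a y) (b y) - u y) (x - 1))"
    by (rule sum.distrib)
  also have "(\<Sum>x\<in>{0..<int k}. (\<lambda>y. min (a y) (b y) - u y) (x - 1)) = (\<Sum>x\<in>{0..<int k}. min (a x) (b x) - u x)"
    by (rule sum_shift_m1) (simp add: cyl_period[OF ca] cyl_period[OF cb] cyl_period[OF cu] min_def)
  also have "(\<Sum>x\<in>{0..<int k}. max (a x) (b x) - a x) + (\<Sum>x\<in>{0..<int k}. min (a x) (b x) - u x)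
      = (\<Sum>x\<in>{0..<int k}. b x - u x)"
    by (subst sum.distrib[symmetric]) (rule sum.cong, auto simp: max_def min_def)
  finally have s2: "ssize l a = ssize b u" unfolding ssize_def .
  show ?thesis unfolding Rset_def l_def[symmetric] strip_iff using ca cb cl il s1 s2 sa by auto
qed

lemma G_in: assumes "l \<in> Rset a b p q" shows "Gm a b l \<in> Lset a b p q"
proof -
  have s: "strip p b l" "strip q a l" using assms unfolding Rset_def by auto
  have ca: "cp a" and cb: "cp b" and cl: "cp l" using s unfolding strip_def by auto
  have ia: "\<And>m. a m \<le> l m" "\<And>m. l (m+1) \<le> a m" and ib: "\<And>m. b m \<le> l m" "\<And>m. l (m+1) \<le> b m"
    using s unfolding strip_def interl_def by auto
  define u where "u = Gm a b l"
  have le: "u m \<le> min (a m) (b m)" for m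
    using ia(1)[of "m+1"] ib(1)[of "m+1"] unfolding u_def Gm_def by auto
  have ge: "max (a (m+1)) (b (m+1)) \<le> u m" for m
    using ia(2)[of m] ib(2)[of m] unfolding u_def Gm_def by auto
  have per: "u (m + int k) = u m - NN" for m
  proof -
    have e: "m + int k + 1 = (m + 1) + int k" by simp
    show ?thesis unfolding u_def Gm_def e cyl_period[OF ca] cyl_period[OF cb] cyl_period[OF cl]
      by (simp add: max_def min_def)
  qed
  have cu: "cp u"
  proof (rule cp_intro)
    fix m show "u (m + 1) \<le> u m" using ge[of m] le[of "m+1"] by auto
    show "u (m + int k) = u m - NN" by (rule per)
  qed
  have iu: "interl u a" "interl u b" unfolding interl_def using ge le by (meson max.bounded_iff min.bounded_iff)+
  have sa: "int p = ssize l b" "int q = ssize l a" using s unfolding strip_iff by auto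
  have "ssize a u = (\<Sum>x\<in>{0..<int k}. (a x - min (a x) (b x)) + (\<lambda>y. l y - max (a y) (b y)) (x + 1))"
    unfolding ssize_def u_def Gm_def by (simp add: algebra_simps)
  also have "\<dots> = (\<Sum>x\<in>{0..<int k}. a x - min (a x) (b x)) + (\<Sum>x\<in>{0..<int k}. (\<lambda>y. l y - max (a y) (b y)) (x + 1))"
    by (rule sum.distrib)
  also have "(\<Sum>x\<in>{0..<int k}. (\<lambda>y. l y - max (a y) (b y)) (x + 1)) = (\<Sum>x\<in>{0..<int k}. l x - max (a x) (b x))"
    by (rule sum_shift_p1) (simp add: cyl_period[OF ca] cyl_period[OF cb] cyl_period[OF cl] max_def)
  also have "(\<Sum>x\<in>{0..<int k}. a x - min (a x) (b x)) + (\<Sum>x\<in>{0..<int k}. l x - max (a x) (b x))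
      = (\<Sum>x\<in>{0..<int k}. l x - b x)"
    by (subst sum.distrib[symmetric]) (rule sum.cong, auto simp: max_def min_def)
  finally have s1: "ssize a u = ssize l b" unfolding ssize_def .
  have "ssize b u = (\<Sum>x\<in>{0..<int k}. (b x - min (a x) (b x)) + (\<lambda>y. l y - max (a y) (b y)) (x + 1))"
    unfolding ssize_def u_def Gm_def by (simp add: algebra_simps)
  also have "\<dots> = (\<Sum>x\<in>{0..<int k}. b x - min (a x) (b x)) + (\<Sum>x\<in>{0..<int k}. (\<lambda>y. l y - max (a y) (b y)) (x + 1))"
    by (rule sum.distrib)
  also have "(\<Sum>x\<in>{0..<int k}. (\<lambda>y. l y - max (a y) (b y)) (x + 1)) = (\<Sum>x\<in>{0..<int k}. l x - max (a x) (b x))"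
    by (rule sum_shift_p1) (simp add: cyl_period[OF ca] cyl_period[OF cb] cyl_period[OF cl] max_def)
  also have "(\<Sum>x\<in>{0..<int k}. b x - min (a x) (b x)) + (\<Sum>x\<in>{0..<int k}. l x - max (a x) (b x))
      = (\<Sum>x\<in>{0..<int k}. l x - a x)"
    by (subst sum.distrib[symmetric]) (rule sum.cong, auto simp: max_def min_def)
  finally have s2: "ssize b u = ssize l a" unfolding ssize_def .
  show ?thesis unfolding Lset_def u_def[symmetric] strip_iff using ca cb cu iu s1 s2 sa by auto
qed

lemma GF: "Gm a b (Fm a b u) = u" unfolding Gm_def Fm_def by (auto simp: fun_eq_iff)
lemma FG: "Fm a b (Gm a b l) = l" unfolding Gm_def Fm_def by (auto simp: fun_eq_iff)

lemma local_bij: "bij_betw (Fm a b) (Lset a b p q) (Rset a b p q)"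
  by (rule bij_betw_byWitness[where f'="Gm a b"]) (auto simp: GF FG F_in G_in)

end


datatype mv = Up nat | Dn nat

context cyl begin

fun stp :: "mv \<Rightarrow> (int \<Rightarrow> int) \<Rightarrow> (int \<Rightarrow> int) \<Rightarrow> bool" where
  "stp (Up p) x y = strip p x y"
| "stp (Dn p) x y = strip p y x"

fun walks :: "mv list \<Rightarrow> (int \<Rightarrow> int) \<Rightarrow> (int \<Rightarrow> int) \<Rightarrow> (int \<Rightarrow> int) list set" where
  "walks [] a b = (if a = b then {[]} else {})"
| "walks (s # w) a b = {c # r | c r. stp s a c \<and> r \<in> walks w c b}"

lemma cons_cong:
  assumes "\<And>c. P c \<Longrightarrow> A c \<approx> B c"
  shows "{c # r | c r. P c \<and> r \<in> A c} \<approx> {c # r | c r. P c \<and> r \<in> B c}"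
proof -
  have "\<forall>c. \<exists>fg. P c \<longrightarrow> ((\<forall>x\<in>A c. fst fg x \<in> B c \<and> snd fg (fst fg x) = x) \<and> (\<forall>y\<in>B c. snd fg y \<in> A c \<and> fst fg (snd fg y) = y))"
    using assms unfolding eqpoll_iff_bijections by fastforce
  then obtain FG where FG: "\<And>c. P c \<Longrightarrow> ((\<forall>x\<in>A c. fst (FG c) x \<in> B c \<and> snd (FG c) (fst (FG c) x) = x) \<and> (\<forall>y\<in>B c. snd (FG c) y \<in> A c \<and> fst (FG c) (snd (FG c) y) = y))"
    by metis
  show ?thesis unfolding eqpoll_iff_bijections
    apply (rule exI[of _ "\<lambda>l. hd l # fst (FG (hd l)) (tl l)"])
    apply (rule exI[of _ "\<lambda>l. hd l # snd (FG (hd l)) (tl l)"])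
    using FG by auto
qed

lemma walks_len: "r \<in> walks w a b \<Longrightarrow> length r = length w \<and> last (a # r) = b"
  by (induction w arbitrary: a r) (auto split: if_splits)

lemma swap_base: "walks (Dn p # Up q # v) a b \<approx> walks (Up q # Dn p # v) a b"
proof -
  have e1: "walks (Dn p # Up q # v) a b = {c # z # r | c z r. c \<in> Lset a z p q \<and> r \<in> walks v z b}"
    unfolding Lset_def by auto
  have e2: "walks (Up q # Dn p # v) a b = {c # z # r | c z r. c \<in> Rset a z p q \<and> r \<in> walks v z b}"
    unfolding Rset_def by auto
  show ?thesis unfolding e1 e2 eqpoll_iff_bijections
    apply (rule exI[of _ "\<lambda>l. Fm a (hd (tl l)) (hd l) # tl l"])
    apply (rule exI[of _ "\<lambda>l. Gm a (hd (tl l)) (hd l) # tl l"])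
    by (auto simp: F_in G_in GF FG)
qed

lemma swap: "walks (u @ Dn p # Up q # v) a b \<approx> walks (u @ Up q # Dn p # v) a b"
proof (induction u arbitrary: a)
  case Nil then show ?case using swap_base by simp
next
  case (Cons s u)
  show ?case by (simp only: append_Cons walks.simps) (rule cons_cong, rule Cons)
qed

lemma bubble1: "walks (u @ Dn p # map Up qs @ v) a b \<approx> walks (u @ map Up qs @ Dn p # v) a b"
proof (induction qs arbitrary: u)
  case Nil then show ?case by simp
next
  case (Cons q qs)
  have "walks (u @ Dn p # map Up (q # qs) @ v) a b = walks (u @ Dn p # Up q # (map Up qs @ v)) a b" by simp
  also have "\<dots> \<approx> walks (u @ Up q # Dn p # (map Up qs @ v)) a b" by (rule swap)
  also have "walks (u @ Up q # Dn p # (map Up qs @ v)) a b = walks ((u @ [Up q]) @ Dn p # map Up qs @ v) a b" by simp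
  also have "\<dots> \<approx> walks ((u @ [Up q]) @ map Up qs @ Dn p # v) a b" by (rule Cons)
  also have "walks ((u @ [Up q]) @ map Up qs @ Dn p # v) a b = walks (u @ map Up (q # qs) @ Dn p # v) a b" by simp
  finally show ?case .
qed

lemma bubble: "walks (u @ map Dn ps @ map Up qs @ v) a b \<approx> walks (u @ map Up qs @ map Dn ps @ v) a b"
proof (induction ps arbitrary: u)
  case Nil then show ?case by simp
next
  case (Cons p ps)
  have "walks (u @ map Dn (p # ps) @ map Up qs @ v) a b = walks ((u @ [Dn p]) @ map Dn ps @ map Up qs @ v) a b" by simp
  also have "\<dots> \<approx> walks ((u @ [Dn p]) @ map Up qs @ map Dn ps @ v) a b" by (rule Cons)
  also have "walks ((u @ [Dn p]) @ map Up qs @ map Dn ps @ v) a b = walks (u @ Dn p # map Up qs @ (map Dn ps @ v)) a b" by simp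
  also have "\<dots> \<approx> walks (u @ map Up qs @ Dn p # (map Dn ps @ v)) a b" by (rule bubble1)
  also have "walks (u @ map Up qs @ Dn p # (map Dn ps @ v)) a b = walks (u @ map Up qs @ map Dn (p # ps) @ v) a b" by simp
  finally show ?case .
qed

lemma walks_append_eq: "walks (u @ v) a b = (\<lambda>(c, r1, r2). r1 @ r2) ` (SIGMA c:UNIV. walks u a c \<times> walks v c b)"
proof (induction u arbitrary: a)
  case Nil
  have "(SIGMA c:UNIV. walks [] a c \<times> walks v c b) = (\<lambda>r. (a, [], r)) ` walks v a b"
    by (auto split: if_splits)
  then show ?case by (simp add: image_image)
next
  case (Cons s u)
  show ?case
  proof (rule set_eqI, rule iffI)
    fix x assume "x \<in> walks ((s # u) @ v) a b"
    then obtain c r where x: "x = c # r" "stp s a c" "r \<in> walks (u @ v) c b" by auto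
    then obtain d r1 r2 where "r = r1 @ r2" "r1 \<in> walks u c d" "r2 \<in> walks v d b" using Cons by auto
    then show "x \<in> (\<lambda>(c, r1, r2). r1 @ r2) ` (SIGMA c:UNIV. walks (s # u) a c \<times> walks v c b)"
      using x by (intro image_eqI[where x="(d, c # r1, r2)"]) auto
  next
    fix x assume "x \<in> (\<lambda>(c, r1, r2). r1 @ r2) ` (SIGMA c:UNIV. walks (s # u) a c \<times> walks v c b)"
    then obtain y where y: "y \<in> (SIGMA c:UNIV. walks (s # u) a c \<times> walks v c b)" "x = (\<lambda>(c, r1, r2). r1 @ r2) y" by blast
    obtain d r1 r2 where "y = (d, r1, r2)" by (cases y) auto
    then have x: "x = r1 @ r2" "r1 \<in> walks (s # u) a d" "r2 \<in> walks v d b" using y by auto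
    then obtain c r where r1: "r1 = c # r" "stp s a c" "r \<in> walks u c d" by auto
    have "r @ r2 \<in> walks (u @ v) c b" unfolding Cons
      using r1 x by (intro image_eqI[where x="(d, r, r2)"]) auto
    then show "x \<in> walks ((s # u) @ v) a b" using x r1 by auto
  qed
qed

lemma walks_append: "walks (u @ v) a b \<approx> (SIGMA c:UNIV. walks u a c \<times> walks v c b)"
proof -
  have "inj_on (\<lambda>(c, r1, r2). r1 @ r2) (SIGMA c:UNIV. walks u a c \<times> walks v c b)"
  proof (rule inj_onI)
    fix x y assume hx: "x \<in> (SIGMA c:UNIV. walks u a c \<times> walks v c b)" and hy: "y \<in> (SIGMA c:UNIV. walks u a c \<times> walks v c b)"
      and hxy: "(\<lambda>(c, r1, r2). r1 @ r2) x = (\<lambda>(c, r1, r2). r1 @ r2) y"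
    obtain c r1 r2 where x: "x = (c, r1, r2)" by (cases x) auto
    obtain c' r1' r2' where y: "y = (c', r1', r2')" by (cases y) auto
    have h: "r1 \<in> walks u a c" "r2 \<in> walks v c b" "r1' \<in> walks u a c'" "r2' \<in> walks v c' b"
      "r1 @ r2 = r1' @ r2'" using hx hy hxy x y by auto
    have "length r1 = length r1'" using h walks_len by metis
    then have "r1 = r1'" "r2 = r2'" using h(5) by auto
    moreover have "c = c'" using walks_len[OF h(1)] walks_len[OF h(3)] \<open>r1 = r1'\<close> by simp
    ultimately show "x = y" using x y by simp
  qed
  then show ?thesis unfolding walks_append_eq by (rule inj_on_image_eqpoll_self)
qed

lemma walks_single_Dn: "walks [Dn p] c b = (if strip p b c then {[b]} else {})" by auto
lemma walks_single_Up: "walks [Up p] b c = (if strip p b c then {[c]} else {})" by auto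

lemma walks_rev: "walks (map Dn (rev ps)) a b \<approx> walks (map Up ps) b a"
proof (induction ps arbitrary: b)
  case Nil then show ?case by auto
next
  case (Cons p ps)
  have "walks (map Dn (rev (p # ps))) a b = walks (map Dn (rev ps) @ [Dn p]) a b" by simp
  also have "\<dots> \<approx> (SIGMA c:UNIV. walks (map Dn (rev ps)) a c \<times> walks [Dn p] c b)" by (rule walks_append)
  also have "\<dots> \<approx> (SIGMA c:UNIV. walks [Up p] b c \<times> walks (map Up ps) c a)"
  proof (rule Sigma_eqpoll_cong[where h=id], simp)
    fix c
    have "walks (map Dn (rev ps)) a c \<times> walks [Dn p] c b \<approx> walks (map Up ps) c a \<times> walks [Up p] b c"
      by (rule times_eqpoll_cong[OF Cons]) (subst walks_single_Dn, subst walks_single_Up, simp add: singleton_eqpoll)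
    also have "\<dots> \<approx> walks [Up p] b c \<times> walks (map Up ps) c a" by (rule times_commute_eqpoll)
    finally show "walks (map Dn (rev ps)) a c \<times> walks [Dn p] c b \<approx> walks [Up p] b (id c) \<times> walks (map Up ps) (id c) a" by simp
  qed
  also have "\<dots> \<approx> walks ([Up p] @ map Up ps) b a" by (rule eqpoll_sym, rule walks_append)
  finally show ?case by simp
qed

lemma walks_cp: "r \<in> walks w a b \<Longrightarrow> cp a \<Longrightarrow> cp b"
proof (induction w arbitrary: a r)
  case Nil then show ?case by (auto split: if_splits)
next
  case (Cons s w) then obtain c r' where "stp s a c" "r' \<in> walks w c b" by auto
  moreover have "cp c" using \<open>stp s a c\<close> by (cases s) (auto simp: strip_def)
  ultimately show ?case using Cons by blast
qed

lemma walks_cp': "r \<in> walks w a b \<Longrightarrow> cp b \<Longrightarrow> cp a"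
proof (induction w arbitrary: a r)
  case Nil then show ?case by (auto split: if_splits)
next
  case (Cons s w) then obtain c r' where "stp s a c" "r' \<in> walks w c b" by auto
  then show ?case by (cases s) (auto simp: strip_def)
qed

lemma walks_Up_sub: "r \<in> walks (map Up ps) a b \<Longrightarrow> cyl_subseteq a b"
proof (induction ps arbitrary: a r)
  case Nil then show ?case by (auto split: if_splits simp: cyl_subseteq_def)
next
  case (Cons p ps) then obtain c r' where "strip p a c" "r' \<in> walks (map Up ps) c b" by auto
  then show ?case using Cons unfolding strip_def interl_def cyl_subseteq_def by (meson order_trans)
qed

end


context cyl begin

lemma skew_points_iff[simp]: "(x, y) \<in> skew_points l m \<longleftrightarrow> m x < y \<and> y \<le> l x"
  unfolding skew_points_def in_shape_def by auto

definition fv :: "(box \<Rightarrow> 'a option) \<Rightarrow> int \<times> int \<Rightarrow> 'a" where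
  "fv R p = the (R (box_proj k n p))"

definition sst :: "(int \<Rightarrow> int) \<Rightarrow> (int \<Rightarrow> int) \<Rightarrow> (box \<Rightarrow> ('a::linorder) option) \<Rightarrow> bool" where
  "sst l m R \<longleftrightarrow> dom R = skew_boxes k n l m \<and>
      (\<forall>x y1 y2. (x, y1) \<in> skew_points l m \<longrightarrow> (x, y2) \<in> skew_points l m \<longrightarrow> y1 < y2 \<longrightarrow>
          fv R (x, y1) \<le> fv R (x, y2)) \<and>
      (\<forall>x1 x2 y. (x1, y) \<in> skew_points l m \<longrightarrow> (x2, y) \<in> skew_points l m \<longrightarrow> x1 < x2 \<longrightarrow>
          fv R (x1, y) < fv R (x2, y))"

lemma sst_dom: "sst l m R \<Longrightarrow> dom R = skew_boxes k n l m" unfolding sst_def by blast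
lemma sst_row: "sst l m R \<Longrightarrow> (x, y1) \<in> skew_points l m \<Longrightarrow> (x, y2) \<in> skew_points l m \<Longrightarrow> y1 < y2 \<Longrightarrow>
          fv R (x, y1) \<le> fv R (x, y2)" unfolding sst_def by blast
lemma sst_col: "sst l m R \<Longrightarrow> (x1, y) \<in> skew_points l m \<Longrightarrow> (x2, y) \<in> skew_points l m \<Longrightarrow> x1 < x2 \<Longrightarrow>
          fv R (x1, y) < fv R (x2, y)" unfolding sst_def by blast

lemma SSCT_iff: "T \<in> SSCT k n l m \<longleftrightarrow> (\<exists>R. T = (l, m, R) \<and> sst l m R)"
  unfolding SSCT_def sst_def fv_def by blast

lemma wt_eq: "wt (l, m, R) c = card {b. R b = Some c}" unfolding wt_def by simp

definition TabW :: "(int \<Rightarrow> int) \<Rightarrow> (int \<Rightarrow> int) \<Rightarrow> ('a::linorder \<Rightarrow> nat) \<Rightarrow> 'a cyltab set" where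
  "TabW l m w = {T \<in> SSCT k n l m. wt T = w}"

lemma skew_boxes_dom: "b \<in> skew_boxes k n l m \<Longrightarrow> \<exists>p. p \<in> skew_points l m \<and> b = box_proj k n p"
  unfolding skew_boxes_def by blast

lemma fib_finite: assumes "sst l m R" "cp l" "cp m" shows "finite {b. R b = Some c}"
proof -
  have "{b. R b = Some c} \<subseteq> dom R" by auto
  then show ?thesis using assms finite_skew_boxes unfolding sst_def by (metis finite_subset)
qed

lemma entry_pos: assumes "sst l m R" "cp l" "cp m" "R b = Some c" shows "wt (l, m, R) c > 0"
proof -
  have "b \<in> {b. R b = Some c}" using assms by simp
  then show ?thesis unfolding wt_eq using fib_finite[OF assms(1-3)] card_gt_0_iff by blast
qed

lemma sst_fv: assumes "sst l m R" "cp l" "cp m" "p \<in> skew_points l m"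
  shows "R (box_proj k n p) = Some (fv R p)"
proof -
  have "box_proj k n p \<in> dom R" using assms skew_boxes_mem sst_dom by blast
  then show ?thesis unfolding fv_def by auto
qed

lemma row_unique:
  assumes "mx \<le> v1" "v1 \<le> lx" "mx \<le> v2" "v2 \<le> lx"
    and "\<And>y. mx < y \<Longrightarrow> y \<le> lx \<Longrightarrow> P y \<longleftrightarrow> y \<le> (v1::int)"
    and "\<And>y. mx < y \<Longrightarrow> y \<le> lx \<Longrightarrow> P y \<longleftrightarrow> y \<le> v2"
  shows "v1 = v2"
proof (rule ccontr)
  assume "v1 \<noteq> v2"
  then consider "v1 < v2" | "v2 < v1" by linarith
  then show False
  proof cases
    case 1 then show False using assms(5)[of v2] assms(6)[of v2] assms by auto
  next
    case 2 then show False using assms(5)[of v1] assms(6)[of v1] assms by auto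
  qed
qed

lemma skew_split_points: assumes "\<forall>x. m x \<le> v x" "\<forall>x. v x \<le> l x"
  shows "skew_points l m = skew_points v m \<union> skew_points l v"
proof (rule set_eqI)
  fix p :: "int \<times> int" obtain x y where p: "p = (x, y)" by (cases p)
  show "p \<in> skew_points l m \<longleftrightarrow> p \<in> skew_points v m \<union> skew_points l v"
    unfolding p using spec[OF assms(1), of x] spec[OF assms(2), of x] by auto
qed

lemma skew_split: assumes "\<forall>x. m x \<le> v x" "\<forall>x. v x \<le> l x"
  shows "skew_boxes k n l m = skew_boxes k n v m \<union> skew_boxes k n l v"
  unfolding skew_boxes_def skew_split_points[OF assms] by auto

lemma box_in_iff: assumes "cp l" "cp m" "b = box_proj k n p"
  shows "b \<in> skew_boxes k n l m \<longleftrightarrow> p \<in> skew_points l m"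
  using skew_boxes_mem assms by blast

end


context cyl begin

lemma box_shift_k: "box_proj k n (x + int k, y) = box_proj k n (x, y + NN)"
  unfolding box_proj_eq by (auto intro!: exI[of _ 1])

lemma fv_shift: "fv R (x + int k, y) = fv R (x, y + NN)"
  unfolding fv_def box_shift_k ..

definition restr :: "(int \<Rightarrow> int) \<Rightarrow> (int \<Rightarrow> int) \<Rightarrow> (box \<Rightarrow> 'a option) \<Rightarrow> box \<Rightarrow> 'a option" where
  "restr l v R = (\<lambda>b. if b \<in> skew_boxes k n l v then R b else None)"

definition ext :: "(int \<Rightarrow> int) \<Rightarrow> (int \<Rightarrow> int) \<Rightarrow> 'a \<Rightarrow> (box \<Rightarrow> 'a option) \<Rightarrow> box \<Rightarrow> 'a option" where
  "ext v m a R' = (\<lambda>b. if b \<in> skew_boxes k n v m then Some a else R' b)"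

context
  fixes l m :: "int \<Rightarrow> int" and a :: "'a::linorder" and w :: "'a \<Rightarrow> nat"
  assumes cl: "cp l" and cm: "cp m" and ml: "\<forall>x. m x \<le> l x" and wa: "\<forall>c. w c \<noteq> 0 \<longrightarrow> a \<le> c"
begin

definition nuOf :: "(box \<Rightarrow> 'a option) \<Rightarrow> int \<Rightarrow> int" where
  "nuOf R = (\<lambda>x. Max (insert (m x) {y. m x < y \<and> y \<le> l x \<and> fv R (x, y) \<le> a}))"

lemma ent_ge: assumes "sst l m R" "wt (l, m, R) = w" "p \<in> skew_points l m" shows "a \<le> fv R p"
  using entry_pos[OF assms(1) cl cm sst_fv[OF assms(1) cl cm assms(3)]] assms(2) wa by auto

lemma nu_char: assumes "sst l m R"
  shows "m x \<le> nuOf R x" "nuOf R x \<le> l x"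
    "\<And>y. m x < y \<Longrightarrow> y \<le> l x \<Longrightarrow> fv R (x, y) \<le> a \<longleftrightarrow> y \<le> nuOf R x"
proof -
  let ?S = "insert (m x) {y. m x < y \<and> y \<le> l x \<and> fv R (x, y) \<le> a}"
  have fin: "finite ?S" by (rule finite_subset[of _ "{m x..l x}"]) (use ml in auto)
  have nu: "nuOf R x = Max ?S" unfolding nuOf_def by simp
  show "m x \<le> nuOf R x" unfolding nu using fin by (simp add: Max_ge)
  show "nuOf R x \<le> l x" unfolding nu using fin ml by (simp add: Max_le_iff)
  fix y assume y: "m x < y" "y \<le> l x"
  show "fv R (x, y) \<le> a \<longleftrightarrow> y \<le> nuOf R x"
  proof
    assume "fv R (x, y) \<le> a" then have "y \<in> ?S" using y by simp
    then show "y \<le> nuOf R x" unfolding nu using fin by simp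
  next
    assume yle: "y \<le> nuOf R x"
    have "Max ?S \<in> ?S" using fin by (intro Max_in) auto
    then consider "Max ?S = m x" | "m x < Max ?S" "Max ?S \<le> l x" "fv R (x, Max ?S) \<le> a" by auto
    then show "fv R (x, y) \<le> a"
    proof cases
      case 1 then show ?thesis using yle y nu by simp
    next
      case 2
      show ?thesis
      proof (cases "y = Max ?S")
        case True then show ?thesis using 2 by simp
      next
        case False then have "y < Max ?S" using yle nu by simp
        then have "fv R (x, y) \<le> fv R (x, Max ?S)" using sst_row[OF assms, of x y "Max ?S"] 2 y by auto
        then show ?thesis using 2 by simp
      qed
    qed
  qed
qed

lemma nu_interl: assumes "sst l m R" "wt (l, m, R) = w" shows "nuOf R (x + 1) \<le> m x"
proof (rule ccontr)
  assume h: "\<not> nuOf R (x + 1) \<le> m x"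
  let ?y = "nuOf R (x + 1)"
  have "m (x + 1) \<le> m x" using cm cp_mono by blast
  then have y1: "m (x + 1) < ?y" using h by simp
  have y2: "?y \<le> l (x + 1)" using nu_char(2)[OF assms(1)] by blast
  have f1: "fv R (x + 1, ?y) \<le> a" using nu_char(3)[OF assms(1) y1 y2] by simp
  have "l (x + 1) \<le> l x" using cl cp_mono by blast
  then have p: "(x, ?y) \<in> skew_points l m" using h y2 by simp
  have "fv R (x, ?y) < fv R (x + 1, ?y)" using sst_col[OF assms(1) p, of "x+1"] y1 y2 by auto
  moreover have "a \<le> fv R (x, ?y)" using ent_ge[OF assms p] .
  ultimately show False using f1 by simp
qed

lemma nu_period: assumes "sst l m R" shows "nuOf R (x + int k) = nuOf R x - NN"
proof (rule row_unique[where P="\<lambda>y. fv R (x + int k, y) \<le> a"])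
  show "m (x + int k) \<le> nuOf R (x + int k)" "nuOf R (x + int k) \<le> l (x + int k)"
    "\<And>y. m (x + int k) < y \<Longrightarrow> y \<le> l (x + int k) \<Longrightarrow> fv R (x + int k, y) \<le> a \<longleftrightarrow> y \<le> nuOf R (x + int k)"
    using nu_char[OF assms] by blast+
  show "m (x + int k) \<le> nuOf R x - NN" "nuOf R x - NN \<le> l (x + int k)"
    using nu_char(1,2)[OF assms, of x] cyl_period[OF cm] cyl_period[OF cl] by auto
  fix y assume y: "m (x + int k) < y" "y \<le> l (x + int k)"
  then have y': "m x < y + NN" "y + NN \<le> l x" using cyl_period[OF cm] cyl_period[OF cl] by auto
  show "fv R (x + int k, y) \<le> a \<longleftrightarrow> y \<le> nuOf R x - NN"
    unfolding fv_shift using nu_char(3)[OF assms y'] by linarith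
qed

lemma nu_cp: assumes "sst l m R" "wt (l, m, R) = w" shows "cp (nuOf R)"
proof (rule cp_intro)
  fix x
  show "nuOf R (x + 1) \<le> nuOf R x" using nu_interl[OF assms, of x] nu_char(1)[OF assms(1), of x] by simp
  show "nuOf R (x + int k) = nuOf R x - NN" by (rule nu_period[OF assms(1)])
qed

lemma nu_fib: assumes "sst l m R" "wt (l, m, R) = w"
  shows "{b. R b = Some a} = skew_boxes k n (nuOf R) m"
proof (rule set_eqI, rule iffI)
  fix b assume "b \<in> {b. R b = Some a}"
  then have "b \<in> dom R" by auto
  then have "b \<in> skew_boxes k n l m" using sst_dom[OF assms(1)] by simp
  then obtain p where p: "p \<in> skew_points l m" "b = box_proj k n p"
    using skew_boxes_dom by blast
  obtain x y where xy: "p = (x, y)" by (cases p)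
  have "fv R p = a" using \<open>b \<in> {b. R b = Some a}\<close> p unfolding fv_def by auto
  then have "y \<le> nuOf R x" using nu_char(3)[OF assms(1)] p xy by auto
  then have "p \<in> skew_points (nuOf R) m" using p xy by auto
  then show "b \<in> skew_boxes k n (nuOf R) m" using p unfolding skew_boxes_def by auto
next
  fix b assume "b \<in> skew_boxes k n (nuOf R) m"
  then obtain p where p: "p \<in> skew_points (nuOf R) m" "b = box_proj k n p"
    using skew_boxes_dom by blast
  obtain x y where xy: "p = (x, y)" by (cases p)
  have pl: "p \<in> skew_points l m" using p xy nu_char(2)[OF assms(1), of x] by auto
  have "fv R p \<le> a" using nu_char(3)[OF assms(1)] p xy pl by auto
  moreover have "a \<le> fv R p" using ent_ge[OF assms pl] .
  ultimately have "fv R p = a" by simp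
  then show "b \<in> {b. R b = Some a}" using sst_fv[OF assms(1) cl cm pl] p by simp
qed

lemma nu_strip: assumes "sst l m R" "wt (l, m, R) = w" shows "strip (w a) m (nuOf R)"
proof -
  have "card (skew_boxes k n (nuOf R) m) = w a" using nu_fib[OF assms] assms(2) wt_eq[of l m R a] by simp
  then show ?thesis unfolding strip_def interl_def
  using cm nu_cp[OF assms] nu_char(1)[OF assms(1)] nu_interl[OF assms] by auto
qed

lemma restr_sst: assumes "sst l m R" "wt (l, m, R) = w"
  shows "sst l (nuOf R) (restr l (nuOf R) R)"
proof -
  let ?v = "nuOf R"
  have cv: "cp ?v" using nu_cp[OF assms] .
  have vm: "\<forall>x. m x \<le> ?v x" "\<forall>x. ?v x \<le> l x" using nu_char[OF assms(1)] by auto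
  have sub: "skew_boxes k n l ?v \<subseteq> dom R" using sst_dom[OF assms(1)] skew_split[OF vm] by auto
  have eq: "restr l ?v R (box_proj k n p) = R (box_proj k n p)" if "p \<in> skew_points l ?v" for p
    using that skew_boxes_mem[OF cl cv] unfolding restr_def by auto
  have ps: "p \<in> skew_points l m" if "p \<in> skew_points l ?v" for p
    using that skew_split_points[OF vm] by auto
  show ?thesis unfolding sst_def
  proof (intro conjI allI impI)
    show "dom (restr l ?v R) = skew_boxes k n l ?v" using sub unfolding restr_def dom_def by auto
  next
    fix x y1 y2 assume h: "(x, y1) \<in> skew_points l ?v" "(x, y2) \<in> skew_points l ?v" "y1 < y2"
    then show "fv (restr l ?v R) (x, y1) \<le> fv (restr l ?v R) (x, y2)"
      using sst_row[OF assms(1) ps[OF h(1)] ps[OF h(2)] h(3)] eq[OF h(1)] eq[OF h(2)] unfolding fv_def by simp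
  next
    fix x1 x2 y assume h: "(x1, y) \<in> skew_points l ?v" "(x2, y) \<in> skew_points l ?v" "x1 < x2"
    then show "fv (restr l ?v R) (x1, y) < fv (restr l ?v R) (x2, y)"
      using sst_col[OF assms(1) ps[OF h(1)] ps[OF h(2)] h(3)] eq[OF h(1)] eq[OF h(2)] unfolding fv_def by simp
  qed
qed

lemma restr_wt: assumes "sst l m R" "wt (l, m, R) = w"
  shows "wt (l, nuOf R, restr l (nuOf R) R) = w(a := 0)"
proof
  fix c
  let ?v = "nuOf R"
  have cv: "cp ?v" using nu_cp[OF assms] .
  show "wt (l, ?v, restr l ?v R) c = (w(a := 0)) c"
  proof (cases "c = a")
    case True
    have "{b. restr l ?v R b = Some a} = {}"
    proof (rule ccontr)
      assume "{b. restr l ?v R b = Some a} \<noteq> {}"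
      then obtain b where b: "restr l ?v R b = Some a" by auto
      then have bs: "b \<in> skew_boxes k n l ?v" "R b = Some a" unfolding restr_def by (auto split: if_splits)
      then obtain p where p: "p \<in> skew_points l ?v" "b = box_proj k n p" using skew_boxes_dom by blast
      obtain x y where xy: "p = (x, y)" by (cases p)
      have "b \<in> skew_boxes k n ?v m" using nu_fib[OF assms] bs by auto
      then have "p \<in> skew_points ?v m" using skew_boxes_mem[OF cv cm] p by auto
      then show False using p xy by auto
    qed
    then show ?thesis using True wt_eq[of l ?v "restr l ?v R" a] by simp
  next
    case False
    have "{b. restr l ?v R b = Some c} = {b. R b = Some c}"
    proof (rule set_eqI, rule iffI)
      fix b assume "b \<in> {b. restr l ?v R b = Some c}"
      then show "b \<in> {b. R b = Some c}" unfolding restr_def by (auto split: if_splits)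
    next
      fix b assume b: "b \<in> {b. R b = Some c}"
      have "b \<notin> skew_boxes k n ?v m"
      proof
        assume "b \<in> skew_boxes k n ?v m"
        then have "R b = Some a" using nu_fib[OF assms] by blast
        then show False using b False by simp
      qed
      moreover have "b \<in> skew_boxes k n l m" using b sst_dom[OF assms(1)] by auto
      ultimately have "b \<in> skew_boxes k n l ?v"
        using skew_split[of m ?v l] nu_char[OF assms(1)] by auto
      then show "b \<in> {b. restr l ?v R b = Some c}" using b unfolding restr_def by auto
    qed
    then show ?thesis using False wt_eq[of l ?v "restr l ?v R" c] wt_eq[of l m R c] assms(2) by simp
  qed
qed


lemma skew_disj: assumes "cp l" "cp v" "cp m" "b \<in> skew_boxes k n l v" shows "b \<notin> skew_boxes k n v m"
proof
  assume b2: "b \<in> skew_boxes k n v m"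
  obtain p where p: "p \<in> skew_points l v" "b = box_proj k n p" using assms(4) skew_boxes_dom by blast
  obtain x y where xy: "p = (x, y)" by (cases p)
  have "p \<in> skew_points v m" using skew_boxes_mem[OF assms(2,3)] p b2 by auto
  then show False using p xy by auto
qed

context
  fixes v :: "int \<Rightarrow> int" and R' :: "box \<Rightarrow> 'a option"
  assumes sv: "strip (w a) m v" and vl: "\<forall>x. v x \<le> l x" and sR': "sst l v R'" and wR': "wt (l, v, R') = w(a := 0)"
begin

lemma cv: "cp v" using sv unfolding strip_def by blast
lemma mv: "\<forall>x. m x \<le> v x" using sv unfolding strip_def interl_def by blast
lemma vint: "v (x + 1) \<le> m x" using sv unfolding strip_def interl_def by blast

lemma ext_ent: assumes "R' b = Some c" shows "a < c"
proof -
  have "wt (l, v, R') c > 0" using entry_pos[OF sR' cl cv assms] .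
  then have "c \<noteq> a" "w c \<noteq> 0" using wR' by (auto split: if_splits)
  then have "a \<le> c" using wa by blast
  then show ?thesis using \<open>c \<noteq> a\<close> by (simp add: order.strict_iff_order)
qed

lemma ext_fv1: assumes "p \<in> skew_points l v" shows "fv (ext v m a R') p = fv R' p" "a < fv R' p"
proof -
  have "box_proj k n p \<in> skew_boxes k n l v" using assms skew_boxes_mem[OF cl cv] by blast
  then have "box_proj k n p \<notin> skew_boxes k n v m" using skew_disj[OF cl cv cm] by blast
  then show "fv (ext v m a R') p = fv R' p" unfolding fv_def ext_def by simp
  show "a < fv R' p" using ext_ent sst_fv[OF sR' cl cv assms] by blast
qed

lemma ext_fv2: assumes "p \<in> skew_points v m" shows "fv (ext v m a R') p = a"
proof -
  have "box_proj k n p \<in> skew_boxes k n v m" using assms skew_boxes_mem[OF cv cm] by blast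
  then show ?thesis unfolding fv_def ext_def by simp
qed

lemma ext_sst: "sst l m (ext v m a R')"
  unfolding sst_def
proof (intro conjI allI impI)
  show "dom (ext v m a R') = skew_boxes k n l m"
    unfolding skew_split[OF mv vl] using sst_dom[OF sR'] unfolding ext_def dom_def by auto
next
  fix x y1 y2 assume h: "(x, y1) \<in> skew_points l m" "(x, y2) \<in> skew_points l m" "y1 < y2"
  show "fv (ext v m a R') (x, y1) \<le> fv (ext v m a R') (x, y2)"
  proof (cases "y2 \<le> v x")
    case True
    then show ?thesis using h ext_fv2[of "(x, y1)"] ext_fv2[of "(x, y2)"] by auto
  next
    case False
    then have p2: "(x, y2) \<in> skew_points l v" using h by auto
    show ?thesis
    proof (cases "y1 \<le> v x")
      case True
      then show ?thesis using h ext_fv2[of "(x, y1)"] ext_fv1[OF p2] by auto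
    next
      case False
      then have p1: "(x, y1) \<in> skew_points l v" using h by auto
      then show ?thesis using ext_fv1[OF p1] ext_fv1[OF p2] sst_row[OF sR' p1 p2 h(3)] by simp
    qed
  qed
next
  fix x1 x2 y assume h: "(x1, y) \<in> skew_points l m" "(x2, y) \<in> skew_points l m" "x1 < x2"
  show "fv (ext v m a R') (x1, y) < fv (ext v m a R') (x2, y)"
  proof (cases "y \<le> v x2")
    case True
    have "v x2 \<le> v (x1 + 1)" using cyl_anti[OF cv, of "x1 + 1" x2] h(3) by simp
    then have "y \<le> m x1" using True vint[of x1] by simp
    then show ?thesis using h by simp
  next
    case False
    then have p2: "(x2, y) \<in> skew_points l v" using h by auto
    show ?thesis
    proof (cases "y \<le> v x1")
      case True
      then show ?thesis using h ext_fv2[of "(x1, y)"] ext_fv1[OF p2] by auto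
    next
      case False
      then have p1: "(x1, y) \<in> skew_points l v" using h by auto
      then show ?thesis using ext_fv1[OF p1] ext_fv1[OF p2] sst_col[OF sR' p1 p2 h(3)] by simp
    qed
  qed
qed

lemma ext_wt: "wt (l, m, ext v m a R') = w"
proof
  fix c
  show "wt (l, m, ext v m a R') c = w c"
  proof (cases "c = a")
    case True
    have "{b. ext v m a R' b = Some a} = skew_boxes k n v m"
    proof (rule set_eqI, rule iffI)
      fix b assume b: "b \<in> {b. ext v m a R' b = Some a}"
      show "b \<in> skew_boxes k n v m"
      proof (rule ccontr)
        assume "b \<notin> skew_boxes k n v m"
        then have "R' b = Some a" using b unfolding ext_def by simp
        then show False using ext_ent by blast
      qed
    qed (simp add: ext_def)
    then have "wt (l, m, ext v m a R') a = card (skew_boxes k n v m)" using wt_eq[of l m "ext v m a R'" a] by simp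
    also have "\<dots> = w a" using sv unfolding strip_def by blast
    finally show ?thesis using True by simp
  next
    case False
    have "{b. ext v m a R' b = Some c} = {b. R' b = Some c}"
    proof (rule set_eqI, rule iffI)
      fix b assume b: "b \<in> {b. ext v m a R' b = Some c}"
      then show "b \<in> {b. R' b = Some c}" using False unfolding ext_def by (auto split: if_splits)
    next
      fix b assume b: "b \<in> {b. R' b = Some c}"
      then have "b \<in> skew_boxes k n l v" using sst_dom[OF sR'] by auto
      then have "b \<notin> skew_boxes k n v m" using skew_disj[OF cl cv cm] by blast
      then show "b \<in> {b. ext v m a R' b = Some c}" using b unfolding ext_def by simp
    qed
    then show ?thesis using False wt_eq[of l m "ext v m a R'" c] wt_eq[of l v R' c] wR' by simp
  qed
qed

lemma nu_ext: "nuOf (ext v m a R') = v"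
proof
  fix x
  show "nuOf (ext v m a R') x = v x"
  proof (rule row_unique[where P="\<lambda>y. fv (ext v m a R') (x, y) \<le> a"])
    show "m x \<le> nuOf (ext v m a R') x" "nuOf (ext v m a R') x \<le> l x"
      "\<And>y. m x < y \<Longrightarrow> y \<le> l x \<Longrightarrow> fv (ext v m a R') (x, y) \<le> a \<longleftrightarrow> y \<le> nuOf (ext v m a R') x"
      using nu_char[OF ext_sst] by blast+
    show "m x \<le> v x" "v x \<le> l x" using mv vl by auto
    fix y assume y: "m x < y" "y \<le> l x"
    show "fv (ext v m a R') (x, y) \<le> a \<longleftrightarrow> y \<le> v x"
    proof (cases "y \<le> v x")
      case True then show ?thesis using y ext_fv2[of "(x, y)"] by simp
    next
      case False
      then have "(x, y) \<in> skew_points l v" using y by simp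
      then show ?thesis using ext_fv1[of "(x, y)"] False by auto
    qed
  qed
qed

lemma restr_ext: "restr l v (ext v m a R') = R'"
proof
  fix b
  show "restr l v (ext v m a R') b = R' b"
  proof (cases "b \<in> skew_boxes k n l v")
    case True
    then have "b \<notin> skew_boxes k n v m" using skew_disj[OF cl cv cm] by blast
    then show ?thesis using True unfolding restr_def ext_def by simp
  next
    case False
    then have "R' b = None" using sst_dom[OF sR'] by auto
    then show ?thesis using False unfolding restr_def by simp
  qed
qed

end

lemma ext_restr: assumes "sst l m R" "wt (l, m, R) = w"
  shows "ext (nuOf R) m a (restr l (nuOf R) R) = R"
proof
  fix b
  let ?v = "nuOf R"
  have vm: "\<forall>x. m x \<le> ?v x" "\<forall>x. ?v x \<le> l x" using nu_char[OF assms(1)] by auto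
  show "ext ?v m a (restr l ?v R) b = R b"
  proof (cases "b \<in> skew_boxes k n ?v m")
    case True
    then have "R b = Some a" using nu_fib[OF assms] by blast
    then show ?thesis using True unfolding ext_def by simp
  next
    case False
    show ?thesis
    proof (cases "b \<in> skew_boxes k n l ?v")
      case True then show ?thesis using False unfolding ext_def restr_def by simp
    next
      case F2: False
      then have "b \<notin> skew_boxes k n l m" using False skew_split[OF vm] by auto
      then have "R b = None" using sst_dom[OF assms(1)] by auto
      then show ?thesis using False F2 unfolding ext_def restr_def by simp
    qed
  qed
qed

lemma K: "TabW l m w \<approx> (SIGMA v:{v. strip (w a) m v \<and> (\<forall>x. v x \<le> l x)}. TabW l v (w(a := 0)))"
  unfolding eqpoll_iff_bijections
proof (intro exI conjI ballI)
  let ?f = "\<lambda>T. (nuOf (snd (snd T)), (l, nuOf (snd (snd T)), restr l (nuOf (snd (snd T))) (snd (snd T))))"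
  let ?g = "\<lambda>(v, T'). (l, m, ext v m a (snd (snd T')))"
  fix T assume T: "T \<in> TabW l m w"
  then obtain R where R: "T = (l, m, R)" "sst l m R" "wt (l, m, R) = w"
    unfolding TabW_def SSCT_iff by auto
  show "?f T \<in> (SIGMA v:{v. strip (w a) m v \<and> (\<forall>x. v x \<le> l x)}. TabW l v (w(a := 0)))"
    using R nu_strip[OF R(2,3)] nu_char(2)[OF R(2)] restr_sst[OF R(2,3)] restr_wt[OF R(2,3)]
    unfolding TabW_def SSCT_iff by auto
  show "?g (?f T) = T" using R ext_restr[OF R(2,3)] by simp
next
  let ?f = "\<lambda>T. (nuOf (snd (snd T)), (l, nuOf (snd (snd T)), restr l (nuOf (snd (snd T))) (snd (snd T))))"
  let ?g = "\<lambda>(v, T'). (l, m, ext v m a (snd (snd T')))"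
  fix X assume X: "X \<in> (SIGMA v:{v. strip (w a) m v \<and> (\<forall>x. v x \<le> l x)}. TabW l v (w(a := 0)))"
  then obtain v R' where vR: "X = (v, (l, v, R'))" "strip (w a) m v" "\<forall>x. v x \<le> l x" "sst l v R'" "wt (l, v, R') = w(a := 0)"
    unfolding TabW_def SSCT_iff by auto
  show "?g X \<in> TabW l m w"
    using vR ext_sst[OF vR(2-5)] ext_wt[OF vR(2-5)] unfolding TabW_def SSCT_iff by auto
  show "?f (?g X) = X" using vR nu_ext[OF vR(2-5)] restr_ext[OF vR(2-5)] by simp
qed

end
end


context cyl begin

lemma TabW_zero: assumes "cp l" "cp m" "\<forall>x. m x \<le> l x"
  shows "TabW l m (\<lambda>_. 0 :: nat) = (if m = l then {(l, l, Map.empty)} else ({} :: ('a::linorder) cyltab set))"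
proof (cases "m = l")
  case True
  have sk: "skew_points l l = {}" unfolding skew_points_def in_shape_def by auto
  have "sst l l (Map.empty :: box \<Rightarrow> 'a option)" unfolding sst_def skew_boxes_def sk by auto
  moreover have "wt (l, l, Map.empty :: box \<Rightarrow> 'a option) = (\<lambda>_. 0)" unfolding wt_def by auto
  moreover have "T = (l, l, Map.empty)" if T: "T \<in> TabW l l (\<lambda>_. 0 :: nat)" for T :: "'a cyltab"
  proof -
    obtain R where R: "T = (l, l, R)" "sst l l R" using T unfolding TabW_def SSCT_iff by auto
    have "dom R = {}" using sst_dom[OF R(2)] unfolding skew_boxes_def sk by simp
    then show ?thesis using R by auto
  qed
  ultimately show ?thesis using True unfolding TabW_def SSCT_iff by auto
next
  case False
  have "T \<notin> TabW l m (\<lambda>_. 0 :: nat)" for T :: "'a cyltab"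
  proof
    assume "T \<in> TabW l m (\<lambda>_. 0 :: nat)"
    then obtain R where R: "T = (l, m, R)" "sst l m R" "wt (l, m, R) = (\<lambda>_. 0)" unfolding TabW_def SSCT_iff by auto
    have "R b = None" for b
    proof (rule ccontr)
      assume "R b \<noteq> None" then obtain c where "R b = Some c" by auto
      then have "wt (l, m, R) c > 0" using entry_pos[OF R(2) assms(1,2)] by blast
      then show False using R(3) by simp
    qed
    then have "skew_boxes k n l m = {}" using sst_dom[OF R(2)] by auto
    then have "skew_points l m = {}" unfolding skew_boxes_def by auto
    then have "l x \<le> m x" for x using skew_points_iff[of x "l x" l m] by auto
    then have "m = l" using assms(3) by (auto intro: antisym)
    then show False using False by simp
  qed
  then show ?thesis using False by auto
qed

lemma TW: assumes "sorted_wrt (<) as" "\<forall>c. w c \<noteq> 0 \<longrightarrow> c \<in> set as" "cp l" "cp m" "\<forall>x. m x \<le> l x"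
  shows "TabW l m (w :: 'a::linorder \<Rightarrow> nat) \<approx> walks (map (\<lambda>c. Up (w c)) as) m l"
  using assms
proof (induction as arbitrary: m w)
  case Nil
  then have w0: "w = (\<lambda>_. 0)" by auto
  show ?case unfolding w0 TabW_zero[OF Nil(3-5)] by (simp add: singleton_eqpoll)
next
  case (Cons a as)
  have wa: "\<forall>c. w c \<noteq> 0 \<longrightarrow> a \<le> c" using Cons(2,3) by (auto intro: less_imp_le)
  have "TabW l m w \<approx> (SIGMA v:{v. strip (w a) m v \<and> (\<forall>x. v x \<le> l x)}. TabW l v (w(a := 0)))"
    by (rule K[OF Cons(4,5,6) wa])
  also have "\<dots> \<approx> (SIGMA v:{v. strip (w a) m v \<and> (\<forall>x. v x \<le> l x)}. walks (map (\<lambda>c. Up (w c)) as) v l)"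
  proof (rule Sigma_eqpoll_cong[where h=id], simp)
    fix v assume v: "v \<in> {v. strip (w a) m v \<and> (\<forall>x. v x \<le> l x)}"
    have anot: "a \<notin> set as" using Cons(2) by auto
    have "TabW l v (w(a := 0)) \<approx> walks (map (\<lambda>c. Up ((w(a := 0)) c)) as) v l"
      apply (rule Cons(1))
      using Cons(2,3,4) v unfolding strip_def by auto
    also have "map (\<lambda>c. Up ((w(a := 0)) c)) as = map (\<lambda>c. Up (w c)) as"
      using anot by (auto intro: map_cong)
    finally show "TabW l v (w(a := 0)) \<approx> walks (map (\<lambda>c. Up (w c)) as) (id v) l" by (simp only: id_apply)
  qed
  also have "\<dots> \<approx> (\<lambda>(v, r). v # r) ` (SIGMA v:{v. strip (w a) m v \<and> (\<forall>x. v x \<le> l x)}. walks (map (\<lambda>c. Up (w c)) as) v l)"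
    by (rule eqpoll_sym, rule inj_on_image_eqpoll_self) (auto simp: inj_on_def)
  finally have 1: "TabW l m w \<approx> (\<lambda>(v, r). v # r) ` (SIGMA v:{v. strip (w a) m v \<and> (\<forall>x. v x \<le> l x)}. walks (map (\<lambda>c. Up (w c)) as) v l)" .
  have "(\<lambda>(v, r). v # r) ` (SIGMA v:{v. strip (w a) m v \<and> (\<forall>x. v x \<le> l x)}. walks (map (\<lambda>c. Up (w c)) as) v l)
      = walks (map (\<lambda>c. Up (w c)) (a # as)) m l"
  proof (rule set_eqI, rule iffI)
    fix x assume "x \<in> walks (map (\<lambda>c. Up (w c)) (a # as)) m l"
    then obtain v r where vr: "x = v # r" "strip (w a) m v" "r \<in> walks (map (\<lambda>c. Up (w c)) as) v l" by auto
    have "cyl_subseteq v l" using walks_Up_sub[of r "map (\<lambda>c. w c) as"] vr(3) by (simp add: comp_def)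
    then show "x \<in> (\<lambda>(v, r). v # r) ` (SIGMA v:{v. strip (w a) m v \<and> (\<forall>x. v x \<le> l x)}. walks (map (\<lambda>c. Up (w c)) as) v l)"
      using vr unfolding cyl_subseteq_def by (intro image_eqI[where x="(v, r)"]) auto
  qed auto
  then show ?case using 1 by simp
qed

end


lemma fiber_bij:
  assumes "\<And>w. {x \<in> A. f x = w} \<approx> {y \<in> B. g y = w}"
  shows "\<exists>h. bij_betw h A B \<and> (\<forall>x\<in>A. g (h x) = f x)"
proof -
  have "\<forall>w. \<exists>h. bij_betw h {x \<in> A. f x = w} {y \<in> B. g y = w}" using assms unfolding eqpoll_def by blast
  then have "\<exists>H. \<forall>w. bij_betw (H w) {x \<in> A. f x = w} {y \<in> B. g y = w}" by (rule choice)
  then obtain H where H0: "\<forall>w. bij_betw (H w) {x \<in> A. f x = w} {y \<in> B. g y = w}" by blast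
  have H: "\<And>w. bij_betw (H w) {x \<in> A. f x = w} {y \<in> B. g y = w}" using H0 by blast
  define h where "h x = H (f x) x" for x
  have hB: "h x \<in> B" "g (h x) = f x" if "x \<in> A" for x
    using bij_betwE[OF H[of "f x"]] that unfolding h_def by auto
  have "bij_betw h A B"
  proof (rule bij_betw_imageI)
    show "inj_on h A"
    proof (rule inj_onI)
      fix x y assume xy: "x \<in> A" "y \<in> A" "h x = h y"
      then have "f x = f y" using hB(2)[of x] hB(2)[of y] by simp
      then show "x = y" using xy bij_betw_imp_inj_on[OF H[of "f x"]] unfolding h_def inj_on_def by auto
    qed
    show "h ` A = B"
    proof
      show "h ` A \<subseteq> B" using hB by auto
      show "B \<subseteq> h ` A"
      proof
        fix y assume y: "y \<in> B"
        then have "y \<in> H (g y) ` {x \<in> A. f x = g y}" using bij_betw_imp_surj_on[OF H[of "g y"]] by auto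
        then obtain x where "x \<in> A" "f x = g y" "y = H (g y) x" by auto
        then have "y = h x" unfolding h_def by simp
        then show "y \<in> h ` A" using \<open>x \<in> A\<close> by blast
      qed
    qed
  qed
  then show ?thesis using hB by blast
qed

context cyl begin

lemma wt_fin_supp: assumes "sst l m R" "cp l" "cp m" shows "finite {c. wt (l, m, R) c \<noteq> 0}"
proof -
  have "{c. wt (l, m, R) c \<noteq> 0} \<subseteq> (\<lambda>b. the (R b)) ` dom R"
  proof
    fix c assume "c \<in> {c. wt (l, m, R) c \<noteq> 0}"
    then have "card {b. R b = Some c} \<noteq> 0" unfolding wt_eq by simp
    then have "{b. R b = Some c} \<noteq> {}" by (rule contrapos_nn) simp
    then obtain b where "R b = Some c" by auto
    then show "c \<in> (\<lambda>b. the (R b)) ` dom R" by (intro image_eqI[of _ _ b]) auto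
  qed
  moreover have "finite (dom R)" using sst_dom[OF assms(1)] finite_skew_boxes[OF assms(2,3)] by simp
  ultimately show ?thesis by (meson finite_imageI finite_subset)
qed

lemma TW': assumes "sorted_wrt (<) as" "\<forall>c. w c \<noteq> 0 \<longrightarrow> c \<in> set as" "cp l" "cp m" "cyl_subseteq m l"
  shows "TabW l m (w :: 'a::linorder \<Rightarrow> nat) \<approx> walks (map Up (map w as)) m l"
  using TW[OF assms(1-4)] assms(5) unfolding cyl_subseteq_def by (simp add: comp_def)

lemma Sigma_univ: assumes "\<And>x. B x \<noteq> {} \<Longrightarrow> x \<in> M" shows "Sigma M B = Sigma UNIV B"
  using assms by auto

lemma fiber_eq:
  assumes ca: "cp \<alpha>" and cb: "cp \<beta>"
  shows "{x \<in> CRSK_domain k n \<alpha> \<beta>. (wt (fst (fst x)), wt (snd (fst x))) = (w1, w2)}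
     \<approx> {y \<in> CRSK_codomain k n \<alpha> \<beta>. (wt (fst (fst y)), wt (snd (fst y))) = ((w1, w2) :: ('a::linorder \<Rightarrow> nat) \<times> ('a \<Rightarrow> nat))}"
proof (cases "finite ({c. w1 c \<noteq> 0} \<union> {c. w2 c \<noteq> 0})")
  case False
  have e1: "{x \<in> CRSK_domain k n \<alpha> \<beta>. (wt (fst (fst x)), wt (snd (fst x))) = (w1, w2)} = {}"
  proof (rule ccontr)
    assume "\<not> ?thesis"
    then obtain T U mu where x: "((T, U), mu) \<in> CRSK_domain k n \<alpha> \<beta>" "wt T = w1" "wt U = w2" by auto
    then have d: "T \<in> SSCT k n \<alpha> mu" "U \<in> SSCT k n \<beta> mu" "cp mu"
      unfolding CRSK_domain_def by auto
    obtain R where R: "T = (\<alpha>, mu, R)" "sst \<alpha> mu R" using d(1) unfolding SSCT_iff by blast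
    obtain R' where R': "U = (\<beta>, mu, R')" "sst \<beta> mu R'" using d(2) unfolding SSCT_iff by blast
    have "finite {c. w1 c \<noteq> 0}" using wt_fin_supp[OF R(2) ca d(3)] R(1) x(2) by simp
    moreover have "finite {c. w2 c \<noteq> 0}" using wt_fin_supp[OF R'(2) cb d(3)] R'(1) x(3) by simp
    ultimately show False using False by simp
  qed
  have e2: "{y \<in> CRSK_codomain k n \<alpha> \<beta>. (wt (fst (fst y)), wt (snd (fst y))) = (w1, w2)} = {}"
  proof (rule ccontr)
    assume "\<not> ?thesis"
    then obtain T U mu where x: "((T, U), mu) \<in> CRSK_codomain k n \<alpha> \<beta>" "wt T = w1" "wt U = w2" by auto
    then have d: "T \<in> SSCT k n mu \<beta>" "U \<in> SSCT k n mu \<alpha>" "cp mu"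
      unfolding CRSK_codomain_def by auto
    obtain R where R: "T = (mu, \<beta>, R)" "sst mu \<beta> R" using d(1) unfolding SSCT_iff by blast
    obtain R' where R': "U = (mu, \<alpha>, R')" "sst mu \<alpha> R'" using d(2) unfolding SSCT_iff by blast
    have "finite {c. w1 c \<noteq> 0}" using wt_fin_supp[OF R(2) d(3) cb] R(1) x(2) by simp
    moreover have "finite {c. w2 c \<noteq> 0}" using wt_fin_supp[OF R'(2) d(3) ca] R'(1) x(3) by simp
    ultimately show False using False by simp
  qed
  show ?thesis unfolding e1 e2 by (rule eqpoll_refl)
next
  case True
  define as where "as = sorted_list_of_set ({c. w1 c \<noteq> 0} \<union> {c. w2 c \<noteq> 0})"
  have as: "sorted_wrt (<) as" "set as = {c. w1 c \<noteq> 0} \<union> {c. w2 c \<noteq> 0}"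
    unfolding as_def using True by (simp_all add: strict_sorted_list_of_set)
  have s1: "\<forall>c. w1 c \<noteq> 0 \<longrightarrow> c \<in> set as" and s2: "\<forall>c. w2 c \<noteq> 0 \<longrightarrow> c \<in> set as" using as by auto
  define p1 where "p1 = map w1 as"
  define p2 where "p2 = map w2 as"
  define M where "M = {mu. cp mu \<and> cyl_subseteq mu \<alpha> \<and> cyl_subseteq mu \<beta>}"
  define L where "L = {la. cp la \<and> cyl_subseteq \<alpha> la \<and> cyl_subseteq \<beta> la}"
  have "{x \<in> CRSK_domain k n \<alpha> \<beta>. (wt (fst (fst x)), wt (snd (fst x))) = (w1, w2)}
      = (\<lambda>(mu, T, U). ((T, U), mu)) ` (SIGMA mu:M. TabW \<alpha> mu w1 \<times> TabW \<beta> mu w2)" (is "?A = ?B")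
  proof
    show "?A \<subseteq> ?B"
    proof
      fix x assume "x \<in> ?A"
      then obtain T U mu where x: "x = ((T, U), mu)" "cp mu" "cyl_subseteq mu \<alpha>" "cyl_subseteq mu \<beta>"
        "T \<in> SSCT k n \<alpha> mu" "U \<in> SSCT k n \<beta> mu" "wt T = w1" "wt U = w2"
        unfolding CRSK_domain_def by auto
      then show "x \<in> ?B" unfolding M_def TabW_def by (intro image_eqI[where x="(mu, T, U)"]) auto
    qed
    show "?B \<subseteq> ?A"
    proof
      fix x assume "x \<in> ?B"
      then obtain mu T U where h: "x = ((T, U), mu)" "mu \<in> M" "T \<in> TabW \<alpha> mu w1" "U \<in> TabW \<beta> mu w2" by auto
      have "((T, U), mu) \<in> CRSK_domain k n \<alpha> \<beta>" unfolding CRSK_domain_def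
        using h unfolding M_def TabW_def by blast
      then show "x \<in> ?A" using h unfolding TabW_def by simp
    qed
  qed
  also have "\<dots> \<approx> (SIGMA mu:M. TabW \<alpha> mu w1 \<times> TabW \<beta> mu w2)"
    by (rule inj_on_image_eqpoll_self) (auto simp: inj_on_def)
  also have "\<dots> \<approx> (SIGMA mu:M. walks (map Up p1) mu \<alpha> \<times> walks (map Up p2) mu \<beta>)"
  proof (rule Sigma_eqpoll_cong[where h=id], simp)
    fix mu assume "mu \<in> M"
    then have mm: "cp mu" "cyl_subseteq mu \<alpha>" "cyl_subseteq mu \<beta>" unfolding M_def by auto
    show "TabW \<alpha> mu w1 \<times> TabW \<beta> mu w2 \<approx> walks (map Up p1) (id mu) \<alpha> \<times> walks (map Up p2) (id mu) \<beta>"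
      unfolding p1_def p2_def id_apply by (rule times_eqpoll_cong[OF TW'[OF as(1) s1 ca mm(1,2)] TW'[OF as(1) s2 cb mm(1,3)]])
  qed
  also have "(SIGMA mu:M. walks (map Up p1) mu \<alpha> \<times> walks (map Up p2) mu \<beta>)
      = (SIGMA mu:UNIV. walks (map Up p1) mu \<alpha> \<times> walks (map Up p2) mu \<beta>)"
  proof (rule Sigma_univ)
    fix mu assume "walks (map Up p1) mu \<alpha> \<times> walks (map Up p2) mu \<beta> \<noteq> {}"
    then obtain r1 r2 where "r1 \<in> walks (map Up p1) mu \<alpha>" "r2 \<in> walks (map Up p2) mu \<beta>" by auto
    then show "mu \<in> M" unfolding M_def using walks_Up_sub walks_cp'[OF _ ca] by blast
  qed
  also have "\<dots> \<approx> (SIGMA mu:UNIV. walks (map Dn (rev p1)) \<alpha> mu \<times> walks (map Up p2) mu \<beta>)"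
    by (rule Sigma_eqpoll_cong[where h=id], simp, simp only: id_apply, rule times_eqpoll_cong[OF eqpoll_sym[OF walks_rev] eqpoll_refl])
  also have "\<dots> \<approx> walks (map Dn (rev p1) @ map Up p2) \<alpha> \<beta>"
    by (rule eqpoll_sym, rule walks_append)
  also have "\<dots> \<approx> walks (map Up p2 @ map Dn (rev p1)) \<alpha> \<beta>"
    using bubble[of "[]" "rev p1" p2 "[]" \<alpha> \<beta>] by simp
  also have "\<dots> \<approx> (SIGMA la:UNIV. walks (map Up p2) \<alpha> la \<times> walks (map Dn (rev p1)) la \<beta>)"
    by (rule walks_append)
  also have "\<dots> \<approx> (SIGMA la:UNIV. walks (map Up p2) \<alpha> la \<times> walks (map Up p1) \<beta> la)"
    by (rule Sigma_eqpoll_cong[where h=id], simp, simp only: id_apply, rule times_eqpoll_cong[OF eqpoll_refl walks_rev])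
  also have "(SIGMA la:UNIV. walks (map Up p2) \<alpha> la \<times> walks (map Up p1) \<beta> la)
      = (SIGMA la:L. walks (map Up p2) \<alpha> la \<times> walks (map Up p1) \<beta> la)"
  proof (rule Sigma_univ[symmetric])
    fix la assume "walks (map Up p2) \<alpha> la \<times> walks (map Up p1) \<beta> la \<noteq> {}"
    then obtain r1 r2 where "r1 \<in> walks (map Up p2) \<alpha> la" "r2 \<in> walks (map Up p1) \<beta> la" by auto
    then show "la \<in> L" unfolding L_def using walks_Up_sub walks_cp[OF _ ca] by blast
  qed
  also have "\<dots> \<approx> (SIGMA la:L. TabW la \<alpha> w2 \<times> TabW la \<beta> w1)"
  proof (rule Sigma_eqpoll_cong[where h=id], simp)
    fix la assume "la \<in> L"
    then have ll: "cp la" "cyl_subseteq \<alpha> la" "cyl_subseteq \<beta> la" unfolding L_def by auto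
    show "walks (map Up p2) \<alpha> la \<times> walks (map Up p1) \<beta> la \<approx> TabW (id la) \<alpha> w2 \<times> TabW (id la) \<beta> w1"
      unfolding p1_def p2_def id_apply
      by (rule times_eqpoll_cong[OF eqpoll_sym[OF TW'[OF as(1) s2 ll(1) ca ll(2)]] eqpoll_sym[OF TW'[OF as(1) s1 ll(1) cb ll(3)]]])
  qed
  also have "\<dots> \<approx> (\<lambda>(la, Q, P). ((P, Q), la)) ` (SIGMA la:L. TabW la \<alpha> w2 \<times> TabW la \<beta> w1)"
    by (rule eqpoll_sym, rule inj_on_image_eqpoll_self) (auto simp: inj_on_def)
  also have "(\<lambda>(la, Q, P). ((P, Q), la)) ` (SIGMA la:L. TabW la \<alpha> w2 \<times> TabW la \<beta> w1)
      = {y \<in> CRSK_codomain k n \<alpha> \<beta>. (wt (fst (fst y)), wt (snd (fst y))) = (w1, w2)}" (is "?B = ?A")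
  proof
    show "?A \<subseteq> ?B"
    proof
      fix x assume "x \<in> ?A"
      then obtain P Q la where x: "x = ((P, Q), la)" "cp la" "cyl_subseteq \<alpha> la" "cyl_subseteq \<beta> la"
        "P \<in> SSCT k n la \<beta>" "Q \<in> SSCT k n la \<alpha>" "wt P = w1" "wt Q = w2"
        unfolding CRSK_codomain_def by auto
      then show "x \<in> ?B" unfolding L_def TabW_def by (intro image_eqI[where x="(la, Q, P)"]) auto
    qed
    show "?B \<subseteq> ?A"
    proof
      fix x assume "x \<in> ?B"
      then obtain la Q P where h: "x = ((P, Q), la)" "la \<in> L" "Q \<in> TabW la \<alpha> w2" "P \<in> TabW la \<beta> w1" by auto
      have "((P, Q), la) \<in> CRSK_codomain k n \<alpha> \<beta>" unfolding CRSK_codomain_def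
        using h unfolding L_def TabW_def by blast
      then show "x \<in> ?A" using h unfolding TabW_def by simp
    qed
  qed
  finally show ?thesis .
qed

end

theorem mainTheorem1:
  fixes k n :: nat and \<alpha> \<beta> :: "int \<Rightarrow> int"
  assumes "1 \<le> k" and "k < n"
    and "is_cylpar k n \<alpha>" and "is_cylpar k n \<beta>"
  shows "\<exists>CRSK :: (('a::linorder) cyltab \<times> 'a cyltab) \<times> (int \<Rightarrow> int)
                    \<Rightarrow> ('a cyltab \<times> 'a cyltab) \<times> (int \<Rightarrow> int).
           bij_betw CRSK (CRSK_domain k n \<alpha> \<beta>) (CRSK_codomain k n \<alpha> \<beta>) \<and>
           (\<forall>T U mu P Q lam. ((T, U), mu) \<in> CRSK_domain k n \<alpha> \<beta> \<longrightarrow>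
               CRSK ((T, U), mu) = ((P, Q), lam) \<longrightarrow> wt T = wt P \<and> wt U = wt Q)"
proof -
  interpret cyl k n using assms(1,2) by unfold_locales
  let ?f = "\<lambda>x :: ('a cyltab \<times> 'a cyltab) \<times> (int \<Rightarrow> int). (wt (fst (fst x)), wt (snd (fst x)))"
  have "\<exists>h. bij_betw h (CRSK_domain k n \<alpha> \<beta>) (CRSK_codomain k n \<alpha> \<beta>) \<and>
      (\<forall>x\<in>CRSK_domain k n \<alpha> \<beta>. ?f (h x) = ?f x)"
  proof (rule fiber_bij)
    fix w :: "('a \<Rightarrow> nat) \<times> ('a \<Rightarrow> nat)"
    obtain w1 w2 where "w = (w1, w2)" by (cases w)
    then show "{x \<in> CRSK_domain k n \<alpha> \<beta>. ?f x = w} \<approx> {y \<in> CRSK_codomain k n \<alpha> \<beta>. ?f y = w}"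
      using fiber_eq[OF assms(3,4)] by simp
  qed
  then obtain h where h: "bij_betw h (CRSK_domain k n \<alpha> \<beta>) (CRSK_codomain k n \<alpha> \<beta>)"
    "\<forall>x\<in>CRSK_domain k n \<alpha> \<beta>. ?f (h x) = ?f x" by blast
  have "\<forall>T U mu P Q lam. ((T, U), mu) \<in> CRSK_domain k n \<alpha> \<beta> \<longrightarrow>
               h ((T, U), mu) = ((P, Q), lam) \<longrightarrow> wt T = wt P \<and> wt U = wt Q"
  proof (intro allI impI)
    fix T U mu P Q lam
    assume a1: "((T, U), mu) \<in> CRSK_domain k n \<alpha> \<beta>" and a2: "h ((T, U), mu) = ((P, Q), lam)"
    have "?f (h ((T, U), mu)) = ?f ((T, U), mu)" using h(2) a1 by blast
    then show "wt T = wt P \<and> wt U = wt Q" unfolding a2 by simp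
  qed
  then show ?thesis using h(1) by blast
qed


end
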